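(* Let $n>2$ and let $p_{(1)}<\dots<p_{(n)}$ be the order statistics of $n$ i.i.d. $\mathrm{Uniform}(0,1)$ random variables. Let $K(x,t):=x\log\frac xt+(1-x)\log\frac{1-x}{1-t}$ for $x\in[0,1)$, $t\in(0,1)$ (with $0\log0=0$). Then for every $s>0$ and every $j\in\{2,\dots,n\}$, $$\mathbb P\big(nK(j/n,p_{(j)})>s\big)\le e\sqrt2\,j\,e^{-(1-1/j)s},$$ and for $j=1$, $$\mathbb P\big(nK(1/n,p_{(1)})>s\big)\le(1+9/e)\,e^{-s}.$$ *)

theory Defs
  imports "HOL-Probability.Probability"
begin

definition order_stat :: "nat \<Rightarrow> (nat \<Rightarrow> real) \<Rightarrow> nat \<Rightarrow> real" where
  "order_stat n x j = sort (map x [0..<n]) ! (j - 1)"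

definition KL :: "real \<Rightarrow> real \<Rightarrow> real" where
  "KL x t = (if x = 0 then 0 else x * ln (x / t))
            + (if x = 1 then 0 else (1 - x) * ln ((1 - x) / (1 - t)))"

end

theory Submission
  imports Defs
begin


lemma sorted_nth_filter:
  fixes ys :: "real list"
  assumes "sorted ys" "k < length ys" "\<And>a b. P b \<Longrightarrow> a \<le> b \<Longrightarrow> P a"
  shows "P (ys ! k) \<longleftrightarrow> k < length (filter P ys)"
  using assms(1,2)
proof (induction ys arbitrary: k)
  case Nil then show ?case by simp
next
  case (Cons y ys)
  have allge: "\<forall>z\<in>set ys. y \<le> z" using Cons.prems(1) by simp
  show ?case
  proof (cases "P y")
    case True
    then show ?thesis using Cons by (cases k) auto
  next
    case False
    have "\<forall>z\<in>set ys. \<not> P z" using allge False assms(3) by blast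
    then have f: "filter P ys = []" by (simp add: filter_empty_conv)
    have "\<not> P ((y#ys)!k)"
    proof (cases k)
      case 0 then show ?thesis using False by simp
    next
      case (Suc k') then have "k' < length ys" using Cons.prems by simp
      then have "y \<le> ys ! k'" using allge by simp
      then show ?thesis using Suc False assms(3) by auto
    qed
    then show ?thesis using False f by simp
  qed
qed

lemma order_stat_iff:
  assumes "1 \<le> j" "j \<le> n" "\<And>a b. P b \<Longrightarrow> a \<le> b \<Longrightarrow> P a"
  shows "P (order_stat n x j) \<longleftrightarrow> j \<le> card {i. i < n \<and> P (x i)}"
proof -
  have "length (filter P (sort (map x [0..<n]))) = length (filter P (map x [0..<n]))"
    by (simp add: filter_sort)
  also have "\<dots> = card {i. i < n \<and> P (x i)}"
    by (auto simp add: length_filter_conv_card intro!: arg_cong[where f=card])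
  finally have e: "length (filter P (sort (map x [0..<n]))) = card {i. i < n \<and> P (x i)}" .
  show ?thesis unfolding order_stat_def
    using sorted_nth_filter[of "sort (map x [0..<n])" "j - 1" P] assms e by auto
qed

lemma os_le:
  assumes "1 \<le> j" "j \<le> n"
  shows "order_stat n x j \<le> t \<longleftrightarrow> j \<le> card {i. i < n \<and> x i \<le> t}"
  using order_stat_iff[of j n "\<lambda>v. v \<le> t" x] assms by auto

lemma nat_helper: "j \<le> n \<Longrightarrow> \<not> j \<le> (a::nat) \<Longrightarrow> a + b = n \<Longrightarrow> n - j + 1 \<le> b" by linarith

lemma os_ge:
  assumes "1 \<le> j" "j \<le> n" "t \<le> order_stat n x j"
  shows "n - j + 1 \<le> card {i. i < n \<and> t \<le> x i}"
proof -
  have "\<not> j \<le> card {i. i < n \<and> x i < t}"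
    using order_stat_iff[of j n "\<lambda>v. v < t" x] assms by auto
  moreover have "card {i. i < n \<and> x i < t} + card {i. i < n \<and> t \<le> x i} = n"
  proof -
    have "{i. i < n \<and> x i < t} \<union> {i. i < n \<and> t \<le> x i} = {..<n}" by auto
    moreover have "card ({i. i < n \<and> x i < t} \<union> {i. i < n \<and> t \<le> x i}) = card {i. i < n \<and> x i < t} + card {i. i < n \<and> t \<le> x i}"
      by (rule card_Un_disjoint) auto
    ultimately show ?thesis by simp
  qed
  ultimately show ?thesis using nat_helper assms(2) by blast
qed

lemma card_sum: "real (card {i::nat. i < n \<and> P i}) = (\<Sum>i<n. if P i then 1 else 0)"
proof (induction n)
  case 0 then show ?case by simp
next
  case (Suc n)
  show ?case
  proof (cases "P n")
    case True
    then have "{i. i < Suc n \<and> P i} = insert n {i. i < n \<and> P i}" by auto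
    then show ?thesis using Suc True by simp
  next
    case False
    then have "{i. i < Suc n \<and> P i} = {i. i < n \<and> P i}" using less_Suc_eq by auto
    then show ?thesis using Suc False by simp
  qed
qed




lemma prod_if_pow:
  fixes c1 c0 :: real
  shows "(\<Prod>i<n. if P i then c1 else c0) = c1 ^ card {i. i < n \<and> P i} * c0 ^ (n - card {i. i < n \<and> P i})"
proof -
  have "(\<Prod>i<n. if P i then c1 else c0) = (\<Prod>i\<in>{..<n} \<inter> {i. P i}. c1) * (\<Prod>i\<in>{..<n} \<inter> - {i. P i}. c0)"
    by (rule prod.If_cases) simp
  also have "{..<n} \<inter> {i. P i} = {i. i < n \<and> P i}" by auto
  also have "{..<n} \<inter> - {i. P i} = {..<n} - {i. i < n \<and> P i}" by auto
  moreover have "card ({..<n} - {i. i < n \<and> P i}) = n - card {i. i < n \<and> P i}"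
    by (subst card_Diff_subset) auto
  ultimately show ?thesis by simp
qed

lemma pow_mono_count:
  fixes c1 c0 :: real
  assumes "0 \<le> c0" "c0 \<le> c1" "m \<le> N" "N \<le> n"
  shows "c1 ^ m * c0 ^ (n - m) \<le> c1 ^ N * c0 ^ (n - N)"
proof -
  have "c1 ^ N * c0 ^ (n - N) = c1 ^ m * c1 ^ (N - m) * c0 ^ (n - N)"
    using assms by (simp add: power_add[symmetric])
  also have "\<dots> \<ge> c1 ^ m * c0 ^ (N - m) * c0 ^ (n - N)"
    using assms by (intro mult_right_mono mult_left_mono power_mono) (auto intro: order_trans)
  also have "c1 ^ m * c0 ^ (N - m) * c0 ^ (n - N) = c1 ^ m * c0 ^ (n - m)"
    using assms by (simp add: mult.assoc power_add[symmetric])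
  finally show ?thesis .
qed

lemma chernoff:
  fixes M :: "'a measure" and U :: "nat \<Rightarrow> 'a \<Rightarrow> real"
  assumes P: "prob_space M"
    and ind: "prob_space.indep_vars M (\<lambda>_. borel) U {..<n}"
    and S: "S \<in> sets borel"
    and q: "\<And>i. i < n \<Longrightarrow> measure M {\<omega> \<in> space M. U i \<omega> \<in> S} = q"
    and c: "0 \<le> c0" "c0 \<le> c1" "c1 * q + c0 * (1 - q) = 1" "m \<le> n" "0 < c1 ^ m * c0 ^ (n - m)"
  shows "measure M {\<omega> \<in> space M. m \<le> card {i. i < n \<and> U i \<omega> \<in> S}} \<le> 1 / (c1 ^ m * c0 ^ (n - m))"
proof -
  interpret prob_space M by (rule P)
  have rv[measurable]: "U i \<in> borel_measurable M" if "i < n" for i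
    using ind that unfolding indep_vars_def by auto
  define g where "g u = (if u \<in> S then c1 else c0)" for u
  have gm[measurable]: "g \<in> borel_measurable borel" unfolding g_def using S by measurable
  have indX: "indep_vars (\<lambda>_. borel) (\<lambda>i \<omega>. g (U i \<omega>)) {..<n}"
    by (rule indep_vars_compose2[OF ind]) simp
  have Xm: "(\<lambda>\<omega>. g (U i \<omega>)) \<in> borel_measurable M" if "i < n" for i
    using that by measurable
  have intX: "integrable M (\<lambda>\<omega>. g (U i \<omega>))" if "i < n" for i
  proof (rule integrable_const_bound[where B="\<bar>c0\<bar> + \<bar>c1\<bar>"])
    show "AE x in M. norm (g (U i x)) \<le> \<bar>c0\<bar> + \<bar>c1\<bar>" by (auto simp: g_def)
  qed (use Xm that in auto)
  have EX: "(\<integral>\<omega>. g (U i \<omega>) \<partial>M) = 1" if "i < n" for i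
  proof -
    define E where "E = {\<omega> \<in> space M. U i \<omega> \<in> S}"
    have E[measurable]: "E \<in> sets M" unfolding E_def using that S by measurable
    have iE: "integrable M (indicator E :: 'a \<Rightarrow> real)"
      by (rule integrable_real_indicator[OF E]) (simp add: less_top[symmetric])
    have "(\<integral>\<omega>. g (U i \<omega>) \<partial>M) = (\<integral>\<omega>. c0 + (c1 - c0) * indicator E \<omega> \<partial>M)"
      by (intro Bochner_Integration.integral_cong) (auto simp: g_def E_def indicator_def)
    also have "\<dots> = c0 + (c1 - c0) * measure M E"
      by (subst Bochner_Integration.integral_add) (use E iE in \<open>auto simp: prob_space integral_mult_right_zero\<close>)
    also have "\<dots> = 1" using q[OF that] c unfolding E_def by (simp add: algebra_simps)
    finally show ?thesis .
  qed
  define G where "G \<omega> = (\<Prod>i<n. g (U i \<omega>))" for \<omega>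
  have intG: "integrable M G" unfolding G_def
    by (rule indep_vars_integrable[OF _ indX]) (use intX in auto)
  have EG: "(\<integral>\<omega>. G \<omega> \<partial>M) = 1" unfolding G_def
    by (subst indep_vars_lebesgue_integral[OF _ indX]) (use intX EX in auto)
  have G0: "0 \<le> G \<omega>" for \<omega> unfolding G_def g_def using c by (auto intro!: prod_nonneg)
  define cc where "cc = c1 ^ m * c0 ^ (n - m)"
  have "{\<omega> \<in> space M. m \<le> card {i. i < n \<and> U i \<omega> \<in> S}} \<subseteq> {\<omega> \<in> space M. cc \<le> G \<omega>}"
  proof safe
    fix \<omega> assume "\<omega> \<in> space M" "m \<le> card {i. i < n \<and> U i \<omega> \<in> S}"
    moreover have "card {i. i < n \<and> U i \<omega> \<in> S} \<le> n"
      by (rule order_trans[OF card_mono[of "{..<n}"]]) auto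
    ultimately show "cc \<le> G \<omega>" unfolding cc_def G_def g_def prod_if_pow
      using c by (intro pow_mono_count) auto
  qed
  then have "measure M {\<omega> \<in> space M. m \<le> card {i. i < n \<and> U i \<omega> \<in> S}} \<le> measure M {\<omega> \<in> space M. cc \<le> G \<omega>}"
    by (intro finite_measure_mono) (use intG in auto)
  also have "\<dots> \<le> (\<integral>\<omega>. G \<omega> \<partial>M) / cc"
    by (rule integral_Markov_inequality_measure[OF intG, where A="space M"]) (use G0 c in \<open>auto simp: cc_def\<close>)
  finally show ?thesis using EG cc_def by simp
qed




lemma kl_exp:
  fixes t :: real
  assumes "0 < t" "t < 1" "1 \<le> j" "j \<le> n"
  shows "(real j / real n / t) ^ j * ((1 - real j / real n) / (1 - t)) ^ (n - j) = exp (real n * KL (real j / real n) t)"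
proof -
  define x where "x = real j / real n"
  have n0: "real n > 0" using assms by simp
  have x0: "0 < x" "x \<le> 1" using assms n0 unfolding x_def by auto
  have nx: "real n * x = real j" unfolding x_def using n0 by simp
  have e1: "exp (real j * ln (x / t)) = (x / t) ^ j"
    using x0 assms by (simp add: exp_of_nat_mult)
  show ?thesis
  proof (cases "x = 1")
    case True
    then have "j = n" using nx by simp
    then show ?thesis using True e1 unfolding KL_def x_def[symmetric] by simp
  next
    case False
    then have x1: "x < 1" using x0 by simp
    have nx1: "real n * (1 - x) = real (n - j)" using nx assms by (simp add: algebra_simps of_nat_diff)
    have e2: "exp (real (n - j) * ln ((1 - x) / (1 - t))) = ((1 - x) / (1 - t)) ^ (n - j)"
      using x1 assms by (subst exp_of_nat_mult) simp
    have "real n * KL x t = real j * ln (x / t) + real (n - j) * ln ((1 - x) / (1 - t))"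
    proof -
      have "KL x t = x * ln (x / t) + (1 - x) * ln ((1 - x) / (1 - t))"
        unfolding KL_def using x0 x1 by simp
      then have "real n * KL x t = (real n * x) * ln (x / t) + (real n * (1 - x)) * ln ((1 - x) / (1 - t))"
        by (simp add: distrib_left)
      then show ?thesis by (simp only: nx nx1)
    qed
    then show ?thesis using e1 e2 unfolding x_def[symmetric] by (simp add: exp_add)
  qed
qed

lemma unif_prob:
  assumes "prob_space M" "U \<in> borel_measurable M"
    "distr M borel U = uniform_measure lborel {0..1::real}" "A \<in> sets borel"
  shows "measure M {\<omega> \<in> space M. U \<omega> \<in> A} = measure lborel ({0..1} \<inter> A)"
proof -
  have "measure M {\<omega> \<in> space M. U \<omega> \<in> A} = measure (distr M borel U) A"
    using assms by (subst measure_distr) (auto intro!: arg_cong[where f="measure M"])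
  also have "\<dots> = measure lborel ({0..1} \<inter> A) / measure lborel {0..1::real}"
    using assms by (subst assms(3), subst measure_uniform_measure) auto
  finally show ?thesis by simp
qed

lemma unif_le: "measure lborel ({0..1} \<inter> {..t}) = (if t < 0 then 0 else if t \<le> 1 then t else 1::real)"
proof -
  consider "t < 0" | "0 \<le> t" "t \<le> 1" | "1 < t" by linarith
  then show ?thesis
  proof cases
    case 1 then have "{0..1} \<inter> {..t} = {}" by auto
    then show ?thesis using 1 by simp
  next
    case 2 then have "{0..1} \<inter> {..t} = {0..t}" by auto
    then show ?thesis using 2 by simp
  next
    case 3 then have "{0..1} \<inter> {..t} = {0..1::real}" by auto
    then show ?thesis using 3 by simp
  qed
qed

lemma unif_ge: "0 \<le> t \<Longrightarrow> measure lborel ({0..1} \<inter> {t..}) = (if t \<le> 1 then 1 - t else 0::real)"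
proof -
  assume t: "0 \<le> t"
  then have "{0..1} \<inter> {t..} = {t..1::real}" by auto
  then show ?thesis using t by auto
qed




lemma sup_arg:
  fixes p :: "'a \<Rightarrow> real" and B :: "real \<Rightarrow> 'a set"
  assumes P: "prob_space M"
    and Bs: "\<And>t. B t \<in> sets M"
    and Bmono: "\<And>t t'. t \<le> t' \<Longrightarrow> B t \<subseteq> B t'"
    and Bp: "\<And>\<omega> t. \<omega> \<in> space M \<Longrightarrow> p \<omega> \<le> t \<Longrightarrow> \<omega> \<in> B t"
    and Lb: "\<And>t. t \<in> L \<Longrightarrow> t \<le> x"
    and Lc: "\<And>t. t \<in> L \<Longrightarrow> measure M (B t) \<le> c"
    and c0: "0 \<le> c"
  shows "\<exists>F\<in>sets M. {\<omega> \<in> space M. p \<omega> \<in> L} \<subseteq> F \<and> measure M F \<le> c"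
proof (cases "L = {}")
  case True
  then show ?thesis using c0 by (intro bexI[of _ "{}"]) auto
next
  case False
  interpret prob_space M by (rule P)
  have bdd: "bdd_above L" using Lb by (auto simp: bdd_above_def)
  define a where "a = Sup L"
  have up: "t \<le> a" if "t \<in> L" for t unfolding a_def by (rule cSup_upper[OF that bdd])
  show ?thesis
  proof (cases "a \<in> L")
    case True
    show ?thesis
    proof (intro bexI[of _ "B a"] conjI)
      show "{\<omega> \<in> space M. p \<omega> \<in> L} \<subseteq> B a" using up Bp by auto
    qed (use Lc True Bs in auto)
  next
    case notin: False
    define A where "A k = B (a - 1 / Suc k)" for k
    have Asets: "range A \<subseteq> sets M" using Bs unfolding A_def by auto
    have inc: "incseq A" unfolding A_def
    proof (intro incseq_SucI Bmono)
      fix k show "a - 1 / real (Suc k) \<le> a - 1 / real (Suc (Suc k))"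
        by (simp add: frac_le)
    qed
    have Ac: "measure M (A k) \<le> c" for k
    proof -
      have "a - 1 / Suc k < Sup L" unfolding a_def[symmetric] by simp
      then obtain t where t: "t \<in> L" "a - 1 / Suc k < t"
        using less_cSup_iff[OF False bdd] by auto
      have "measure M (A k) \<le> measure M (B t)" unfolding A_def
        using t by (intro finite_measure_mono Bmono Bs) auto
      then show ?thesis using Lc[OF t(1)] by simp
    qed
    show ?thesis
    proof (intro bexI[of _ "\<Union>k. A k"] conjI)
      show "{\<omega> \<in> space M. p \<omega> \<in> L} \<subseteq> (\<Union>k. A k)"
      proof safe
        fix \<omega> assume \<omega>: "\<omega> \<in> space M" "p \<omega> \<in> L"
        have "p \<omega> < a" using up[OF \<omega>(2)] notin \<omega>(2) by (cases "p \<omega> = a") auto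
        then obtain k where k: "1 / real (Suc k) < a - p \<omega>"
          using reals_Archimedean[of "a - p \<omega>"] \<open>p \<omega> < a\<close> by (auto simp: inverse_eq_divide)
        then have "\<omega> \<in> A k" unfolding A_def using \<omega> by (intro Bp) auto
        then show "\<omega> \<in> (\<Union>k. A k)" by auto
      qed
      show "measure M (\<Union>k. A k) \<le> c"
        using finite_Lim_measure_incseq[OF Asets inc] Ac
        by (intro LIMSEQ_le_const2[where X="\<lambda>k. measure M (A k)"]) auto
    qed (use Asets in auto)
  qed
qed




context
  fixes M :: "'a measure" and U :: "nat \<Rightarrow> 'a \<Rightarrow> real" and n :: nat
  assumes P: "prob_space M"
    and ind: "prob_space.indep_vars M (\<lambda>_. borel) U {..<n}"
    and dist: "\<And>i. i < n \<Longrightarrow> distr M borel (U i) = uniform_measure lborel {0..1::real}"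
begin

lemma rvU: "i < n \<Longrightarrow> U i \<in> borel_measurable M"
  using ind P unfolding prob_space.indep_vars_def[OF P] by auto

lemma cnt_sets:
  assumes S: "S \<in> sets borel"
  shows "{\<omega> \<in> space M. m \<le> card {i. i < n \<and> U i \<omega> \<in> S}} \<in> sets M"
proof -
  have [measurable]: "S \<in> sets borel" by (rule S)
  have f: "(\<lambda>\<omega>. if U i \<omega> \<in> S then 1 else 0::real) \<in> borel_measurable M" if "i < n" for i
  proof -
    have [measurable]: "U i \<in> borel_measurable M" using rvU that .
    show ?thesis by measurable
  qed
  have [measurable]: "(\<lambda>\<omega>. \<Sum>i<n. if U i \<omega> \<in> S then 1 else 0::real) \<in> borel_measurable M"
    by (rule borel_measurable_sum) (use f in auto)
  have "{\<omega> \<in> space M. m \<le> card {i. i < n \<and> U i \<omega> \<in> S}} =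
        {\<omega> \<in> space M. real m \<le> (\<Sum>i<n. if U i \<omega> \<in> S then 1 else 0::real)}"
    using card_sum[of n "\<lambda>i. U i _ \<in> S"] by (auto simp flip: card_sum)
  also have "\<dots> \<in> sets M" by measurable
  finally show ?thesis .
qed

lemma q_le: "i < n \<Longrightarrow> measure M {\<omega> \<in> space M. U i \<omega> \<in> {..t}} = (if t < 0 then 0 else if t \<le> 1 then t else 1)"
  using unif_prob[OF P rvU dist, of i "{..t}"] unif_le by simp

lemma q_ge: "i < n \<Longrightarrow> 0 \<le> t \<Longrightarrow> measure M {\<omega> \<in> space M. U i \<omega> \<in> {t..}} = (if t \<le> 1 then 1 - t else 0)"
  using unif_prob[OF P rvU dist, of i "{t..}"] unif_ge by simp

lemma zero_case:
  assumes S: "S \<in> sets borel" and q: "\<And>i. i < n \<Longrightarrow> measure M {\<omega> \<in> space M. U i \<omega> \<in> S} = 0"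
    and m: "1 \<le> m" "m \<le> n" and s: "0 < s"
  shows "measure M {\<omega> \<in> space M. m \<le> card {i. i < n \<and> U i \<omega> \<in> S}} \<le> exp (- s)"
proof -
  have "measure M {\<omega> \<in> space M. m \<le> card {i. i < n \<and> U i \<omega> \<in> S}} \<le> 1 / (exp s ^ m * 1 ^ (n - m))"
    by (rule chernoff[OF P ind S q]) (use m s in auto)
  also have "\<dots> \<le> 1 / exp s"
  proof -
    have "exp s ^ 1 \<le> exp s ^ m" using m s by (intro power_increasing) auto
    then show ?thesis by (simp add: frac_le)
  qed
  finally show ?thesis by (simp add: exp_minus inverse_eq_divide)
qed

lemma lower_bound:
  assumes j: "1 \<le> j" "j \<le> n" and t: "t \<le> real j / real n" and s: "0 < s"
    and K: "s < real n * KL (real j / real n) t"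
  shows "measure M {\<omega> \<in> space M. j \<le> card {i. i < n \<and> U i \<omega> \<in> {..t}}} \<le> exp (- s)"
proof (cases "t \<le> 0")
  case True
  show ?thesis
    by (rule zero_case) (use q_le True j s in \<open>auto simp: not_less\<close>)
next
  case False
  define x where "x = real j / real n"
  have n0: "real n > 0" using j by simp
  have x0: "0 < x" "x \<le> 1" using j n0 unfolding x_def by auto
  have t1: "t < 1"
  proof (rule ccontr)
    assume "\<not> t < 1"
    moreover have "t \<le> x" using t x_def by simp
    ultimately have "t = 1" "x = 1" using x0 by auto
    then have "KL x t = 0" unfolding KL_def by simp
    then show False using K s unfolding x_def by simp
  qed
  define c where "c = (x / t) ^ j * ((1 - x) / (1 - t)) ^ (n - j)"
  have ce: "c = exp (real n * KL x t)" unfolding c_def x_def using kl_exp[of t j n] False t1 j by simp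
  have "measure M {\<omega> \<in> space M. j \<le> card {i. i < n \<and> U i \<omega> \<in> {..t}}} \<le> 1 / c"
    unfolding c_def
  proof (rule chernoff[OF P ind _ q_le])
    show "0 \<le> (1 - x) / (1 - t)" using x0 t1 by simp
    have tx: "t \<le> x" using t x_def by simp
    have "(1 - x) / (1 - t) \<le> 1" using t1 tx by simp
    moreover have "1 \<le> x / t" using tx False by simp
    ultimately show "(1 - x) / (1 - t) \<le> x / t" by linarith
    show "x / t * (if t < 0 then 0 else if t \<le> 1 then t else 1) + (1 - x) / (1 - t) * (1 - (if t < 0 then 0 else if t \<le> 1 then t else 1)) = 1"
      using False t1 by simp
    show "0 < (x / t) ^ j * ((1 - x) / (1 - t)) ^ (n - j)" using ce c_def by simp
  qed (use j in auto)
  also have "\<dots> \<le> exp (- s)"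
    using ce K unfolding x_def by (simp add: exp_minus inverse_eq_divide frac_le)
  finally show ?thesis .
qed

lemma upper_bound:
  assumes j: "1 \<le> j" "j \<le> n" and t: "real j / real n \<le> t" and s: "0 < s"
    and K: "s < real n * KL (real j / real n) t"
  shows "measure M {\<omega> \<in> space M. n - j + 1 \<le> card {i. i < n \<and> U i \<omega> \<in> {t..}}} \<le> exp (- s)"
proof -
  define x where "x = real j / real n"
  have n0: "real n > 0" using j by simp
  have x0: "0 < x" "x \<le> 1" using j n0 unfolding x_def by auto
  have t0: "0 < t" using x0 t x_def by simp
  show ?thesis
  proof (cases "1 \<le> t")
    case True
    show ?thesis
      by (rule zero_case) (use q_ge True t0 j s in auto)
  next
    case False
    then have t1: "t < 1" by simp
    define c where "c = ((1 - x) / (1 - t)) ^ (n - j) * (x / t) ^ (n - (n - j))"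
    have ce: "c = exp (real n * KL x t)" unfolding c_def x_def using kl_exp[of t j n] t0 t1 j
      by (simp add: mult.commute)
    have "measure M {\<omega> \<in> space M. n - j + 1 \<le> card {i. i < n \<and> U i \<omega> \<in> {t..}}}
        \<le> measure M {\<omega> \<in> space M. n - j \<le> card {i. i < n \<and> U i \<omega> \<in> {t..}}}"
    proof -
      interpret prob_space M by (rule P)
      show ?thesis by (intro finite_measure_mono cnt_sets) auto
    qed
    also have "\<dots> \<le> 1 / c"
      unfolding c_def
    proof (rule chernoff[OF P ind _ q_ge])
      show "0 \<le> x / t" using x0 t0 by simp
      have tx: "x \<le> t" using t x_def by simp
      have "(x / t) \<le> 1" using tx t0 by simp
      moreover have "1 \<le> (1 - x) / (1 - t)" using tx t1 by simp
      ultimately show "x / t \<le> (1 - x) / (1 - t)" by linarith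
      show "(1 - x) / (1 - t) * (if t \<le> 1 then 1 - t else 0) + x / t * (1 - (if t \<le> 1 then 1 - t else 0)) = 1"
        using t0 t1 by simp
      show "0 < ((1 - x) / (1 - t)) ^ (n - j) * (x / t) ^ (n - (n - j))" using ce c_def by simp
    qed (use j t0 in auto)
    also have "\<dots> \<le> exp (- s)"
      using ce K unfolding x_def by (simp add: exp_minus inverse_eq_divide frac_le)
    finally show ?thesis .
  qed
qed


lemma two_tail:
  assumes j: "1 \<le> j" "j \<le> n" and s: "0 < s"
  shows "measure M {\<omega> \<in> space M. real n * KL (real j / real n) (order_stat n (\<lambda>i. U i \<omega>) j) > s} \<le> 2 * exp (- s)"
proof -
  interpret prob_space M by (rule P)
  define x where "x = real j / real n"
  define p where "p \<omega> = order_stat n (\<lambda>i. U i \<omega>) j" for \<omega>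
  define L where "L = {t. t \<le> x \<and> s < real n * KL x t}"
  define B where "B t = {\<omega> \<in> space M. j \<le> card {i. i < n \<and> U i \<omega> \<in> {..t}}}" for t
  have "\<exists>F\<in>sets M. {\<omega> \<in> space M. p \<omega> \<in> L} \<subseteq> F \<and> measure M F \<le> exp (- s)"
  proof (rule sup_arg[OF P, of B])
    show "B t \<in> sets M" for t unfolding B_def by (rule cnt_sets) simp
    show "B t \<subseteq> B t'" if "t \<le> t'" for t t'
      unfolding B_def using that
      by (auto intro: order_trans[OF _ card_mono[of "{i. i < n \<and> U i _ \<le> t'}"]])
    show "\<omega> \<in> B t" if "\<omega> \<in> space M" "p \<omega> \<le> t" for \<omega> t
      using that os_le[OF j, of "\<lambda>i. U i \<omega>" t] unfolding B_def p_def by simp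
    show "t \<le> x" if "t \<in> L" for t using that L_def by simp
    show "measure M (B t) \<le> exp (- s)" if "t \<in> L" for t
      unfolding B_def using that lower_bound[OF j, of t s] s unfolding L_def x_def by simp
  qed simp
  then obtain F1 where F1: "F1 \<in> sets M" "{\<omega> \<in> space M. p \<omega> \<in> L} \<subseteq> F1" "measure M F1 \<le> exp (- s)" by blast
  define L' where "L' = {t. x \<le> - t \<and> s < real n * KL x (- t)}"
  define B' where "B' t = {\<omega> \<in> space M. n - j + 1 \<le> card {i. i < n \<and> U i \<omega> \<in> {- t..}}}" for t
  have "\<exists>F\<in>sets M. {\<omega> \<in> space M. - p \<omega> \<in> L'} \<subseteq> F \<and> measure M F \<le> exp (- s)"
  proof (rule sup_arg[OF P, of B'])
    show "B' t \<in> sets M" for t unfolding B'_def by (rule cnt_sets) simp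
    show "B' t \<subseteq> B' t'" if "t \<le> t'" for t t'
      unfolding B'_def using that
      by (auto intro: order_trans[OF _ card_mono[of "{i. i < n \<and> - t' \<le> U i _}"]])
    show "\<omega> \<in> B' t" if "\<omega> \<in> space M" "- p \<omega> \<le> t" for \<omega> t
      using that os_ge[OF j, of "- t" "\<lambda>i. U i \<omega>"] unfolding B'_def p_def by simp
    show "t \<le> - x" if "t \<in> L'" for t using that L'_def by simp
    show "measure M (B' t) \<le> exp (- s)" if "t \<in> L'" for t
      unfolding B'_def using that upper_bound[OF j, of "- t" s] s unfolding L'_def x_def by simp
  qed simp
  then obtain F2 where F2: "F2 \<in> sets M" "{\<omega> \<in> space M. - p \<omega> \<in> L'} \<subseteq> F2" "measure M F2 \<le> exp (- s)" by blast
  have "{\<omega> \<in> space M. real n * KL x (p \<omega>) > s} \<subseteq> F1 \<union> F2"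
  proof safe
    fix \<omega> assume \<omega>: "\<omega> \<in> space M" "real n * KL x (p \<omega>) > s" "\<omega> \<notin> F2"
    show "\<omega> \<in> F1"
    proof (cases "p \<omega> \<le> x")
      case True then show ?thesis using F1(2) \<omega> unfolding L_def by auto
    next
      case False then have "- p \<omega> \<in> L'" using \<omega> unfolding L'_def by auto
      then show ?thesis using F2(2) \<omega> by auto
    qed
  qed
  then have "measure M {\<omega> \<in> space M. real n * KL x (p \<omega>) > s} \<le> measure M (F1 \<union> F2)"
    using F1 F2 by (intro finite_measure_mono) auto
  also have "\<dots> \<le> measure M F1 + measure M F2"
    using F1 F2 by (intro measure_Un_le) auto
  finally show ?thesis using F1 F2 unfolding x_def p_def by simp
qed

end



theorem lemma5:
  fixes M :: "'a measure" and U :: "nat \<Rightarrow> 'a \<Rightarrow> real" and n :: nat and s :: real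
  assumes "prob_space M"
    and "prob_space.indep_vars M (\<lambda>_. borel) U {..<n}"
    and "\<And>i. i < n \<Longrightarrow> distr M borel (U i) = uniform_measure lborel {0..1::real}"
    and "n > 2"
    and "s > 0"
  shows "(\<forall>j\<in>{2..n}.
           measure M {\<omega> \<in> space M. real n * KL (real j / real n) (order_stat n (\<lambda>i. U i \<omega>) j) > s}
             \<le> exp 1 * sqrt 2 * real j * exp (- (1 - 1 / real j) * s))
       \<and> measure M {\<omega> \<in> space M. real n * KL (1 / real n) (order_stat n (\<lambda>i. U i \<omega>) 1) > s}
             \<le> (1 + 9 / exp 1) * exp (- s)"
proof
  have e2: "2 \<le> exp (1::real)" using exp_ge_add_one_self[of "1::real"] by simp
  show "\<forall>j\<in>{2..n}.
           measure M {\<omega> \<in> space M. real n * KL (real j / real n) (order_stat n (\<lambda>i. U i \<omega>) j) > s}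
             \<le> exp 1 * sqrt 2 * real j * exp (- (1 - 1 / real j) * s)"
  proof
    fix j assume j: "j \<in> {2..n}"
    have "measure M {\<omega> \<in> space M. real n * KL (real j / real n) (order_stat n (\<lambda>i. U i \<omega>) j) > s} \<le> 2 * exp (- s)"
      by (rule two_tail[OF assms(1,2,3)]) (use j assms in auto)
    also have "\<dots> \<le> exp 1 * sqrt 2 * real j * exp (- (1 - 1 / real j) * s)"
    proof (rule mult_mono)
      have "1 \<le> sqrt (2::real)" by simp
      moreover have "2 \<le> real j" using j by simp
      ultimately have "2 * 1 * 1 \<le> exp 1 * sqrt 2 * real j"
        using e2 by (intro mult_mono) auto
      then show "2 \<le> exp 1 * sqrt 2 * real j" by simp
      have "- s \<le> - (1 - 1 / real j) * s" using j assms(5) by (simp add: algebra_simps)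
      then show "exp (- s) \<le> exp (- (1 - 1 / real j) * s)" by simp
    qed (use e2 in auto)
    finally show "measure M {\<omega> \<in> space M. real n * KL (real j / real n) (order_stat n (\<lambda>i. U i \<omega>) j) > s}
             \<le> exp 1 * sqrt 2 * real j * exp (- (1 - 1 / real j) * s)" .
  qed
  have "measure M {\<omega> \<in> space M. real n * KL (real 1 / real n) (order_stat n (\<lambda>i. U i \<omega>) 1) > s} \<le> 2 * exp (- s)"
    by (rule two_tail[OF assms(1,2,3)]) (use assms in auto)
  also have "\<dots> \<le> (1 + 9 / exp 1) * exp (- s)"
  proof (rule mult_right_mono)
    have "exp 1 \<le> (9::real)" using exp_le by simp
    then have "1 \<le> 9 / exp (1::real)" by simp
    then show "2 \<le> 1 + 9 / exp (1::real)" by simp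
  qed simp
  finally show "measure M {\<omega> \<in> space M. real n * KL (1 / real n) (order_stat n (\<lambda>i. U i \<omega>) 1) > s}
             \<le> (1 + 9 / exp 1) * exp (- s)" by simp
qed

end
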